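(* Let $\Lambda$ be a proper $H^*$-algebra and let $L$ be a Hilbert $\Lambda$-module. Then the unit ball $B_1(L)=\{x\in L:\|x\|\le1\}$ is compact in the $\Lambda$-weak$^*$ topology on $L$, namely the topology with base consisting of the sets \[W_{x_0,y_1,\dots,y_n,S_1,\dots,S_n,\delta}=\{x\in L:\ |\mathrm{sp}(S_j([x,y_j]-[x_0,y_j]))|<\delta,\ j=1,\dots,n\}\] for $n\in\mathbb N$, $x_0,y_1,\dots,y_n\in L$, $S_1,\dots,S_n\in C(\Lambda)$, $\delta>0$.
   Context: An $H^*$-algebra is a complex associative Banach algebra $\Lambda$ with an inner product $\langle\cdot,\cdot\rangle$ such that $\langle a,a\rangle=\|a\|^2$ for all $a\in\Lambda$, and such that for each $a\in\Lambda$ there is $a^*\in\Lambda$ with $\langle ab,c\rangle=\langle b,a^*c\rangle$ and $\langle ba,c\rangle=\langle b,ca^*\rangle$ for all $b,c\in\Lambda$. It is proper if $a\Lambda=0$ implies $a=0$ (equivalently, every $a$ has a unique adjoint $a^*$). The trace-class is $\tau(\Lambda)=\{ab: a,b\in\Lambda\}$; it is a self-adjoint ideal of $\Lambda$ carrying a norm $\tau(\cdot)$ with $\tau(a^*a)=\|a\|^2$, and there is a continuous linear form $\mathrm{sp}$ (trace) on $\tau(\Lambda)$ with $\mathrm{sp}(ab)=\mathrm{sp}(ba)=\langle a^*,b\rangle$ for $a,b\in\Lambda$. A Hilbert $\Lambda$-module is a right $\Lambda$-module $L$ with a map $[\cdot,\cdot]\colon L\times L\to\tau(\Lambda)$ such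 that for all $\alpha\in\mathbb C$, $x,y,z\in L$, $a\in\Lambda$: $[x,\alpha y]=\alpha[x,y]$, $[x,y+z]=[x,y]+[x,z]$, $[x,ya]=[x,y]a$, $[x,y]^*=[y,x]$; $L$ is a Hilbert space with inner product $\langle x,y\rangle=\mathrm{sp}([x,y])$ (and $\|x\|$ denotes the corresponding norm); and for every $x\neq 0$ there is $a\in\Lambda$, $a\neq0$, with $[x,x]=a^*a$. $C(\Lambda)$ is the operator-norm closure of the span of the left multiplications $L_b\colon x\mapsto bx$ ($b\in\Lambda$) inside the space of bounded linear operators $S$ on $\Lambda$ satisfying $S(xy)=(Sx)y$ for all $x,y\in\Lambda$. *)

theory Defs
  imports "HOL-Analysis.Analysis"
begin

definition cvs :: "(complex \<Rightarrow> 'v::ab_group_add \<Rightarrow> 'v) \<Rightarrow> bool" where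
  "cvs sc \<longleftrightarrow> (\<forall>x. sc 1 x = x) \<and> (\<forall>a b x. sc (a * b) x = sc a (sc b x))
     \<and> (\<forall>a b x. sc (a + b) x = sc a x + sc b x) \<and> (\<forall>a x y. sc a (x + y) = sc a x + sc a y)"

text \<open>Inner product, linear in the second and conjugate-linear in the first argument.\<close>
definition is_inner :: "(complex \<Rightarrow> 'v::ab_group_add \<Rightarrow> 'v) \<Rightarrow> ('v \<Rightarrow> 'v \<Rightarrow> complex) \<Rightarrow> bool" where
  "is_inner sc ip \<longleftrightarrow> (\<forall>x y z. ip x (y + z) = ip x y + ip x z)
     \<and> (\<forall>c x y. ip x (sc c y) = c * ip x y) \<and> (\<forall>x y. ip y x = cnj (ip x y))
     \<and> (\<forall>x. Re (ip x x) \<ge> 0) \<and> (\<forall>x. ip x x = 0 \<longrightarrow> x = 0)"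

definition inorm :: "('v \<Rightarrow> 'v \<Rightarrow> complex) \<Rightarrow> 'v \<Rightarrow> real" where
  "inorm ip x = sqrt (Re (ip x x))"

definition complete_wrt :: "('v::ab_group_add \<Rightarrow> real) \<Rightarrow> bool" where
  "complete_wrt nrm \<longleftrightarrow> (\<forall>X :: nat \<Rightarrow> 'v.
     (\<forall>e>0. \<exists>N. \<forall>m\<ge>N. \<forall>n\<ge>N. nrm (X m - X n) < e) \<longrightarrow>
     (\<exists>l. \<forall>e>0. \<exists>N. \<forall>n\<ge>N. nrm (X n - l) < e))"

definition is_adjoint :: "('a::ring \<Rightarrow> 'a \<Rightarrow> complex) \<Rightarrow> 'a \<Rightarrow> 'a \<Rightarrow> bool" where
  "is_adjoint ip a a' \<longleftrightarrow> (\<forall>b c. ip (a * b) c = ip b (a' * c) \<and> ip (b * a) c = ip b (c * a'))"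

definition H_star_algebra :: "(complex \<Rightarrow> 'a::ring \<Rightarrow> 'a) \<Rightarrow> ('a \<Rightarrow> 'a \<Rightarrow> complex) \<Rightarrow> bool" where
  "H_star_algebra sA ip \<longleftrightarrow> cvs sA
     \<and> (\<forall>c a b. sA c (a * b) = sA c a * b \<and> sA c (a * b) = a * sA c b)
     \<and> is_inner sA ip
     \<and> (\<forall>a b. inorm ip (a * b) \<le> inorm ip a * inorm ip b)
     \<and> complete_wrt (inorm ip)
     \<and> (\<forall>a. \<exists>a'. is_adjoint ip a a')"

definition proper_H_star_algebra :: "(complex \<Rightarrow> 'a::ring \<Rightarrow> 'a) \<Rightarrow> ('a \<Rightarrow> 'a \<Rightarrow> complex) \<Rightarrow> bool" where
  "proper_H_star_algebra sA ip \<longleftrightarrow> H_star_algebra sA ip \<and> (\<forall>a::'a. (\<forall>x. a * x = 0) \<longrightarrow> a = 0)"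

definition adj :: "('a::ring \<Rightarrow> 'a \<Rightarrow> complex) \<Rightarrow> 'a \<Rightarrow> 'a" where
  "adj ip a = (THE a'. is_adjoint ip a a')"

definition trace_class :: "'a::ring set" where
  "trace_class = {a * b | a b. True}"

definition sp :: "('a::ring \<Rightarrow> 'a \<Rightarrow> complex) \<Rightarrow> 'a \<Rightarrow> complex" where
  "sp ip t = (SOME z. \<exists>a b. t = a * b \<and> z = ip (adj ip a) b)"

definition Hilbert_module ::
  "(complex \<Rightarrow> 'a::ring \<Rightarrow> 'a) \<Rightarrow> ('a \<Rightarrow> 'a \<Rightarrow> complex) \<Rightarrow>
   (complex \<Rightarrow> 'b::ab_group_add \<Rightarrow> 'b) \<Rightarrow> ('b \<Rightarrow> 'a \<Rightarrow> 'b) \<Rightarrow> ('b \<Rightarrow> 'b \<Rightarrow> 'a) \<Rightarrow> bool" where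
  "Hilbert_module sA ip sL act br \<longleftrightarrow>
     cvs sL
     \<and> (\<forall>x y a. act (x + y) a = act x a + act y a)
     \<and> (\<forall>x a b. act x (a + b) = act x a + act x b)
     \<and> (\<forall>x a b. act x (a * b) = act (act x a) b)
     \<and> (\<forall>c x a. sL c (act x a) = act (sL c x) a \<and> sL c (act x a) = act x (sA c a))
     \<and> (\<forall>x y. br x y \<in> trace_class)
     \<and> (\<forall>\<alpha> x y. br x (sL \<alpha> y) = sA \<alpha> (br x y))
     \<and> (\<forall>x y z. br x (y + z) = br x y + br x z)
     \<and> (\<forall>x y a. br x (act y a) = br x y * a)
     \<and> (\<forall>x y. adj ip (br x y) = br y x)
     \<and> is_inner sL (\<lambda>x y. sp ip (br x y))
     \<and> complete_wrt (inorm (\<lambda>x y. sp ip (br x y)))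
     \<and> (\<forall>x. x \<noteq> 0 \<longrightarrow> (\<exists>a. a \<noteq> 0 \<and> br x x = adj ip a * a))"

definition Lnorm :: "('a::ring \<Rightarrow> 'a \<Rightarrow> complex) \<Rightarrow> ('b \<Rightarrow> 'b \<Rightarrow> 'a) \<Rightarrow> 'b \<Rightarrow> real" where
  "Lnorm ip br x = inorm (\<lambda>x y. sp ip (br x y)) x"

definition bounded_op :: "(complex \<Rightarrow> 'a::ring \<Rightarrow> 'a) \<Rightarrow> ('a \<Rightarrow> 'a \<Rightarrow> complex) \<Rightarrow> ('a \<Rightarrow> 'a) \<Rightarrow> bool" where
  "bounded_op sA ip S \<longleftrightarrow> (\<forall>x y. S (x + y) = S x + S y) \<and> (\<forall>c x. S (sA c x) = sA c (S x))
     \<and> (\<exists>K. \<forall>x. inorm ip (S x) \<le> K * inorm ip x)"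

definition left_mult_span :: "(complex \<Rightarrow> 'a::ring \<Rightarrow> 'a) \<Rightarrow> ('a \<Rightarrow> 'a) set" where
  "left_mult_span sA = {T. \<exists>(n::nat) c b. T = (\<lambda>x. \<Sum>i<n. sA (c i) (b i * x))}"

text \<open>C(Lambda): operator-norm closure of the span of left multiplications inside the bounded
  operators S with S(xy) = (Sx)y. The operator-norm condition ||S - T|| <= eps is unfolded.\<close>
definition C_alg :: "(complex \<Rightarrow> 'a::ring \<Rightarrow> 'a) \<Rightarrow> ('a \<Rightarrow> 'a \<Rightarrow> complex) \<Rightarrow> ('a \<Rightarrow> 'a) set" where
  "C_alg sA ip = {S. bounded_op sA ip S \<and> (\<forall>x y. S (x * y) = S x * y)
     \<and> (\<forall>e>0. \<exists>T\<in>left_mult_span sA. \<forall>x. inorm ip (S x - T x) \<le> e * inorm ip x)}"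

definition weak_star_base ::
  "(complex \<Rightarrow> 'a::ring \<Rightarrow> 'a) \<Rightarrow> ('a \<Rightarrow> 'a \<Rightarrow> complex) \<Rightarrow> ('b \<Rightarrow> 'b \<Rightarrow> 'a) \<Rightarrow> 'b set set" where
  "weak_star_base sA ip br =
     {{x. \<forall>j<(n::nat). cmod (sp ip (S j (br x (y j) - br x0 (y j)))) < \<delta>} | n x0 y S \<delta>.
        (\<forall>j<n. S j \<in> C_alg sA ip) \<and> \<delta> > 0}"

definition weak_star_topology ::
  "(complex \<Rightarrow> 'a::ring \<Rightarrow> 'a) \<Rightarrow> ('a \<Rightarrow> 'a \<Rightarrow> complex) \<Rightarrow> ('b \<Rightarrow> 'b \<Rightarrow> 'a) \<Rightarrow> 'b topology" where
  "weak_star_topology sA ip br = topology_generated_by (weak_star_base sA ip br)"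

end

theory Submission
  imports Defs
begin

locale ips =
  fixes sc :: "complex \<Rightarrow> 'v::ab_group_add \<Rightarrow> 'v" and ip :: "'v \<Rightarrow> 'v \<Rightarrow> complex"
  assumes cvs: "cvs sc" and inner: "is_inner sc ip"
begin

lemma sc_one[simp]: "sc 1 x = x" using cvs by (simp add: cvs_def)
lemma sc_mult: "sc (a * b) x = sc a (sc b x)" using cvs by (simp add: cvs_def)
lemma sc_add_left: "sc (a + b) x = sc a x + sc b x" using cvs by (simp add: cvs_def)
lemma sc_add_right: "sc a (x + y) = sc a x + sc a y" using cvs by (simp add: cvs_def)
lemma sc_zero_left[simp]: "sc 0 x = 0"
  using sc_add_left[of 0 0 x] by simp
lemma sc_zero_right[simp]: "sc a 0 = 0"
  using sc_add_right[of a 0 0] by simp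
lemma sc_minus_right: "sc a (- x) = - sc a x"
  using sc_add_right[of a x "-x"] by (simp add: eq_neg_iff_add_eq_0 add.commute)
lemma sc_diff_right: "sc a (x - y) = sc a x - sc a y"
  using sc_add_right[of a x "-y"] sc_minus_right by simp
lemma sc_minus_left: "sc (- a) x = - sc a x"
  using sc_add_left[of a "-a" x] by (simp add: eq_neg_iff_add_eq_0 add.commute)
lemma sc_diff_left: "sc (a - b) x = sc a x - sc b x"
  using sc_add_left[of a "-b" x] sc_minus_left by simp
lemma sc_neg1: "sc (-1) x = - x" using sc_minus_left[of 1 x] by simp
lemma sc_sum_right: "sc a (sum f I) = (\<Sum>i\<in>I. sc a (f i))"
  by (induction I rule: infinite_finite_induct) (auto simp: sc_add_right)

lemmas inner_u = inner[unfolded is_inner_def]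
lemma ip_add_right: "ip x (y + z) = ip x y + ip x z" using inner_u[THEN conjunct1] by blast
lemma ip_sc_right: "ip x (sc c y) = c * ip x y" using inner_u[THEN conjunct2, THEN conjunct1] by blast
lemma ip_sym: "ip y x = cnj (ip x y)" using inner_u[THEN conjunct2, THEN conjunct2, THEN conjunct1] by blast
lemma ip_pos: "Re (ip x x) \<ge> 0" using inner_u[THEN conjunct2, THEN conjunct2, THEN conjunct2, THEN conjunct1] by blast
lemma ip_def0: "ip x x = 0 \<Longrightarrow> x = 0" using inner_u[THEN conjunct2, THEN conjunct2, THEN conjunct2, THEN conjunct2] by blast
lemma ip_add_left: "ip (x + y) z = ip x z + ip y z"
proof -
  have "ip (x + y) z = cnj (ip z (x + y))" by (rule ip_sym)
  then show ?thesis using ip_sym[of x z] ip_sym[of y z] by (simp add: ip_add_right)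
qed
lemma ip_sc_left: "ip (sc c x) y = cnj c * ip x y"
proof -
  have "ip (sc c x) y = cnj (ip y (sc c x))" by (rule ip_sym)
  then show ?thesis using ip_sym[of x y] by (simp add: ip_sc_right)
qed
lemma ip_zero_right[simp]: "ip x 0 = 0"
  using ip_add_right[of x 0 0] by simp
lemma ip_zero_left[simp]: "ip 0 x = 0"
  using ip_add_left[of 0 0 x] by simp
lemma ip_minus_right: "ip x (- y) = - ip x y"
  using ip_add_right[of x y "-y"] by (simp add: eq_neg_iff_add_eq_0 add.commute)
lemma ip_minus_left: "ip (- x) y = - ip x y"
  using ip_add_left[of x "-x" y] by (simp add: eq_neg_iff_add_eq_0 add.commute)
lemma ip_diff_right: "ip x (y - z) = ip x y - ip x z"
  using ip_add_right[of x y "-z"] ip_minus_right by simp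
lemma ip_diff_left: "ip (x - y) z = ip x z - ip y z"
  using ip_add_left[of x "-y" z] ip_minus_left by simp
lemma ip_sum_right: "ip x (sum f I) = (\<Sum>i\<in>I. ip x (f i))"
  by (induction I rule: infinite_finite_induct) (auto simp: ip_add_right)
lemma ip_sum_left: "ip (sum f I) x = (\<Sum>i\<in>I. ip (f i) x)"
  by (induction I rule: infinite_finite_induct) (auto simp: ip_add_left)

lemma ip_self_real: "ip x x = complex_of_real (Re (ip x x))"
proof -
  have "Im (ip x x) = - Im (ip x x)" using arg_cong[OF ip_sym[of x x], of Im] by simp
  then have "Im (ip x x) = 0" by simp
  then show ?thesis by (simp add: complex_eq_iff)
qed

definition nrm where "nrm x = inorm ip x"

lemma nrm_sq: "(nrm x)^2 = Re (ip x x)"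
  by (simp add: nrm_def inorm_def ip_pos)
lemma nrm_nonneg[simp]: "nrm x \<ge> 0" by (simp add: nrm_def inorm_def ip_pos)
lemma ip_self_nrm: "ip x x = complex_of_real ((nrm x)^2)"
  using ip_self_real nrm_sq by simp
lemma nrm_zero[simp]: "nrm 0 = 0" by (simp add: nrm_def inorm_def)
lemma nrm_eq_0: "nrm x = 0 \<longleftrightarrow> x = 0"
proof
  assume "nrm x = 0" then have "ip x x = 0" using ip_self_nrm by simp
  then show "x = 0" by (rule ip_def0)
qed simp

lemma ip_expand: "ip (x - sc c y) (x - sc c y) = ip x x - c * ip x y - cnj c * ip y x + (c * cnj c) * ip y y"
proof -
  have "ip (x - sc c y) (x - sc c y) = (ip x x - ip (sc c y) x) - (ip x (sc c y) - ip (sc c y) (sc c y))"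
    by (simp only: ip_diff_left ip_diff_right)
  also have "\<dots> = (ip x x - cnj c * ip y x) - (c * ip x y - c * (cnj c * ip y y))"
    by (simp only: ip_sc_left ip_sc_right)
  finally show ?thesis by (simp add: algebra_simps)
qed

lemma cs_sq: "(cmod (ip x y))^2 \<le> (nrm x)^2 * (nrm y)^2"
proof (cases "y = 0")
  case True then show ?thesis by simp
next
  case False
  define t where "t = (nrm y)^2"
  have tpos: "t > 0" using False nrm_eq_0 nrm_nonneg t_def by (metis zero_less_power2)
  define a where "a = ip y x"
  define c where "c = a / complex_of_real t"
  have yy: "ip y y = complex_of_real t" using ip_self_nrm t_def by simp
  have xy: "ip x y = cnj a" using ip_sym[of x y] a_def by simp
  have "0 \<le> Re (ip (x - sc c y) (x - sc c y))" by (rule ip_pos)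
  also have "ip (x - sc c y) (x - sc c y) = ip x x - complex_of_real ((cmod a)^2 / t)"
  proof -
    have "ip (x - sc c y) (x - sc c y) = ip x x - c * ip x y - cnj c * ip y x + (c * cnj c) * ip y y"
      by (rule ip_expand)
    also have "\<dots> = ip x x - c * cnj a - cnj c * a + (c * cnj c) * complex_of_real t"
      unfolding xy yy a_def by (rule refl)
    also have "\<dots> = ip x x - (a * cnj a) / complex_of_real t"
    proof -
      have T: "complex_of_real t \<noteq> 0" using tpos by simp
      have cc: "cnj c = cnj a / complex_of_real t" by (simp add: c_def)
      have 1: "c * cnj a = (a * cnj a) / complex_of_real t" by (simp add: c_def)
      have 2: "cnj c * a = (a * cnj a) / complex_of_real t" by (simp add: cc mult.commute)
      have 3: "(c * cnj c) * complex_of_real t = (a * cnj a) / complex_of_real t"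
        using T by (simp add: c_def cc power2_eq_square)
      show ?thesis by (simp only: 1 2 3) simp
    qed
    also have "\<dots> = ip x x - complex_of_real ((cmod a)^2 / t)"
      by (simp only: complex_norm_square[symmetric] of_real_divide)
    finally show ?thesis .
  qed
  finally have "(cmod a)^2 / t \<le> (nrm x)^2" using nrm_sq by simp
  then have "(cmod a)^2 \<le> (nrm x)^2 * t" using tpos by (simp add: field_simps)
  moreover have "cmod (ip x y) = cmod a" using xy by simp
  ultimately show ?thesis using t_def by simp
qed

lemma cs: "cmod (ip x y) \<le> nrm x * nrm y"
proof -
  have "(cmod (ip x y))^2 \<le> (nrm x * nrm y)^2" using cs_sq by (simp add: power_mult_distrib)
  then show ?thesis by (rule power2_le_imp_le) simp
qed

lemma nrm_add_sq: "(nrm (x + y))^2 = (nrm x)^2 + 2 * Re (ip x y) + (nrm y)^2"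
proof -
  have "ip (x + y) (x + y) = ip x x + ip x y + ip y x + ip y y"
    by (simp add: ip_add_left ip_add_right)
  moreover have "Re (ip y x) = Re (ip x y)" using ip_sym[of y x] by simp
  ultimately show ?thesis using nrm_sq by simp
qed

lemma nrm_triangle: "nrm (x + y) \<le> nrm x + nrm y"
proof -
  have "Re (ip x y) \<le> nrm x * nrm y" using cs[of x y] complex_Re_le_cmod[of "ip x y"] by linarith
  then have "(nrm (x + y))^2 \<le> (nrm x + nrm y)^2"
    using nrm_add_sq by (simp add: power2_sum)
  then show ?thesis by (rule power2_le_imp_le) (simp add: add_nonneg_nonneg)
qed

lemma nrm_sc: "nrm (sc c x) = cmod c * nrm x"
proof -
  have "ip (sc c x) (sc c x) = (c * cnj c) * ip x x" by (simp add: ip_sc_left ip_sc_right algebra_simps)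
  also have "\<dots> = complex_of_real ((cmod c)^2) * complex_of_real ((nrm x)^2)"
    by (simp only: complex_norm_square[symmetric] ip_self_nrm)
  finally have "(nrm (sc c x))^2 = ((cmod c) * nrm x)^2"
    using nrm_sq[of "sc c x"] by (simp add: power_mult_distrib)
  then show ?thesis
    using nrm_nonneg by (metis norm_ge_zero power2_eq_imp_eq zero_le_mult_iff)
qed

lemma nrm_minus: "nrm (- x) = nrm x"
  using nrm_sc[of "-1" x] sc_neg1 by simp
lemma nrm_diff_commute: "nrm (x - y) = nrm (y - x)"
  by (metis minus_diff_eq nrm_minus)
lemma nrm_diff_triangle: "nrm (x - z) \<le> nrm (x - y) + nrm (y - z)"
  using nrm_triangle[of "x - y" "y - z"] by simp
lemma nrm_triangle_diff: "nrm x - nrm y \<le> nrm (x - y)"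
  using nrm_triangle[of "x - y" y] by simp

lemma nrm_sq_diff_ge: "nrm a - nrm (a - b) \<le> nrm b"
  using nrm_triangle[of "a - b" b] by simp

lemma sc_two: "sc 2 x = x + x"
  using sc_add_left[of 1 1 x] by simp

lemma parallelogram:
  "(nrm (u + v))^2 + (nrm (u - v))^2 = 2 * (nrm u)^2 + 2 * (nrm v)^2"
proof -
  have "(nrm (u - v))^2 = (nrm u)^2 - 2 * Re (ip u v) + (nrm v)^2"
    using nrm_add_sq[of u "- v"] by (simp add: ip_minus_right nrm_minus)
  then show ?thesis using nrm_add_sq[of u v] by simp
qed

lemma orth_from_min:
  assumes "\<And>t. nrm s \<le> nrm (s + sc t m)"
  shows "ip m s = 0"
proof (rule ccontr)
  assume a0: "ip m s \<noteq> 0"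
  define a where "a = ip m s"
  define q where "q = (cmod a)^2"
  have qpos: "q > 0" using a0 a_def q_def by simp
  define lam :: real where "lam = 1 / ((nrm m)^2 + 1)"
  have lampos: "lam > 0" unfolding lam_def by (simp add: add_nonneg_pos)
  define t where "t = - complex_of_real lam * a"
  have sm: "ip s m = cnj a" using ip_sym[of s m] a_def by simp
  have "(nrm (s + sc t m))^2 = (nrm s)^2 + 2 * Re (ip s (sc t m)) + (nrm (sc t m))^2"
    by (rule nrm_add_sq)
  also have "Re (ip s (sc t m)) = - lam * q"
  proof -
    have "ip s (sc t m) = t * cnj a" using sm by (simp add: ip_sc_right)
    also have "\<dots> = - complex_of_real lam * (a * cnj a)" by (simp add: t_def)
    also have "\<dots> = - complex_of_real (lam * q)" by (simp add: complex_norm_square[symmetric] q_def)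
    finally show ?thesis by simp
  qed
  also have "(nrm (sc t m))^2 = lam^2 * q * (nrm m)^2"
    using lampos by (simp add: nrm_sc t_def norm_mult power_mult_distrib q_def)
  finally have eq: "(nrm (s + sc t m))^2 = (nrm s)^2 - lam * q * (2 - lam * (nrm m)^2)"
    by (simp add: algebra_simps power2_eq_square)
  have h0: "0 \<le> (nrm m)^2" by simp
  have "lam * (nrm m)^2 < 1" unfolding lam_def by (simp add: divide_simps) (insert h0, linarith)
  then have "lam * q * (2 - lam * (nrm m)^2) > 0" using lampos qpos by simp
  then have "(nrm (s + sc t m))^2 < (nrm s)^2" using eq by simp
  moreover have "(nrm s)^2 \<le> (nrm (s + sc t m))^2" using assms[of t] by (simp add: power_mono)
  ultimately show False by simp
qed

lemma proj_exists:
  assumes comp: "complete_wrt (inorm ip)"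
    and M0: "0 \<in> M" and Madd: "\<And>a b. a \<in> M \<Longrightarrow> b \<in> M \<Longrightarrow> a + b \<in> M"
    and Msc: "\<And>c a. a \<in> M \<Longrightarrow> sc c a \<in> M"
  shows "\<exists>r. (\<forall>e>0. \<exists>m\<in>M. nrm (r - m) < e) \<and> (\<forall>m\<in>M. ip m (w - r) = 0)"
proof -
  define D where "D = {(nrm (w - m))^2 | m. m \<in> M}"
  define d2 where "d2 = Inf D"
  have Dne: "D \<noteq> {}" using M0 D_def by blast
  have Dbdd: "bdd_below D" unfolding D_def by (rule bdd_belowI[of _ 0]) auto
  have d2le: "d2 \<le> (nrm (w - m))^2" if "m \<in> M" for m
    unfolding d2_def using that by (intro cInf_lower[OF _ Dbdd]) (auto simp: D_def)
  have d2nn: "d2 \<ge> 0" using d2le[OF M0] Dne Dbdd unfolding d2_def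
    by (intro cInf_greatest) (auto simp: D_def)
  have "\<forall>n::nat. \<exists>m. m \<in> M \<and> (nrm (w - m))^2 < d2 + 1 / (real n + 1)"
  proof
    fix n :: nat
    have "Inf D < d2 + 1 / (real n + 1)" unfolding d2_def by (simp add: add_pos_pos)
    from cInf_lessD[OF Dne this] show "\<exists>m. m \<in> M \<and> (nrm (w - m))^2 < d2 + 1 / (real n + 1)"
      by (auto simp: D_def)
  qed
  then obtain mm where mm: "\<And>n. mm n \<in> M" "\<And>n. (nrm (w - mm n))^2 < d2 + 1 / (real n + 1)"
    by metis
  have mid: "sc (1/2) (a + b) \<in> M" if "a \<in> M" "b \<in> M" for a b using that Madd Msc by blast
  have cauchy_bound: "(nrm (mm n - mm k))^2 \<le> 2 / (real n + 1) + 2 / (real k + 1)" for n k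
  proof -
    define u where "u = w - mm n"
    define v where "v = w - mm k"
    have "u + v = sc 2 (w - sc (1/2) (mm n + mm k))"
    proof -
      have "sc 2 (sc (1/2) (mm n + mm k)) = mm n + mm k" by (simp add: sc_mult[symmetric])
      then show ?thesis by (simp add: u_def v_def sc_diff_right sc_two algebra_simps)
    qed
    then have "(nrm (u + v))^2 = 4 * (nrm (w - sc (1/2) (mm n + mm k)))^2"
      by (simp add: nrm_sc power_mult_distrib)
    moreover have "(nrm (w - sc (1/2) (mm n + mm k)))^2 \<ge> d2" using d2le mid mm(1) by blast
    moreover have "(nrm (u - v))^2 = (nrm (mm n - mm k))^2"
    proof -
      have "u - v = mm k - mm n" by (simp add: u_def v_def)
      then show ?thesis using nrm_diff_commute by simp
    qed
    ultimately have "(nrm (mm n - mm k))^2 \<le> 2 * (nrm u)^2 + 2 * (nrm v)^2 - 4 * d2"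
      using parallelogram[of u v] by linarith
    then show ?thesis using mm(2)[of n] mm(2)[of k] unfolding u_def v_def by linarith
  qed
  have "\<exists>l. \<forall>e>0. \<exists>N. \<forall>n\<ge>N. nrm (mm n - l) < e"
    using comp unfolding complete_wrt_def nrm_def[symmetric]
  proof (elim allE impE)
    show "\<forall>e>0. \<exists>N. \<forall>m\<ge>N. \<forall>n\<ge>N. nrm (mm m - mm n) < e"
    proof (intro allI impI)
      fix e :: real assume e: "e > 0"
      obtain N :: nat where N: "4 / e^2 < real N" using reals_Archimedean2 by blast
      have "4 / (real N + 1) < e^2" using N e by (simp add: field_simps) (smt (verit) zero_less_power)
      show "\<exists>N. \<forall>m\<ge>N. \<forall>n\<ge>N. nrm (mm m - mm n) < e"
      proof (intro exI allI impI)
        fix m n assume mN: "m \<ge> N" and nN: "n \<ge> N"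
        have "2 / (real m + 1) \<le> 2 / (real N + 1)" using mN by (simp add: frac_le)
        moreover have "2 / (real n + 1) \<le> 2 / (real N + 1)" using nN by (simp add: frac_le)
        ultimately have "(nrm (mm m - mm n))^2 < e^2"
          using cauchy_bound[of m n] \<open>4 / (real N + 1) < e^2\<close> by linarith
        then show "nrm (mm m - mm n) < e" using e by (simp add: power_less_imp_less_base)
      qed
    qed
  qed
  then obtain r where r: "\<And>e. e > 0 \<Longrightarrow> \<exists>N. \<forall>n\<ge>N. nrm (mm n - r) < e" by blast
  have approx: "\<forall>e>0. \<exists>m\<in>M. nrm (r - m) < e"
  proof (intro allI impI)
    fix e :: real assume "e > 0"
    then obtain N where "\<forall>n\<ge>N. nrm (mm n - r) < e" using r by blast
    then have "nrm (r - mm N) < e" using nrm_diff_commute by auto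
    then show "\<exists>m\<in>M. nrm (r - m) < e" using mm(1) by blast
  qed
  have lower: "sqrt d2 \<le> nrm (w - q)" if q: "\<forall>e>0. \<exists>m\<in>M. nrm (q - m) < e" for q
  proof (rule field_le_epsilon)
    fix e :: real assume "e > 0"
    then obtain m where m: "m \<in> M" "nrm (q - m) < e" using q by blast
    have "sqrt d2 \<le> nrm (w - m)" using d2le[OF m(1)] by (simp add: real_le_lsqrt)
    moreover have "nrm (w - m) \<le> nrm (w - q) + nrm (q - m)" using nrm_diff_triangle by blast
    ultimately show "sqrt d2 \<le> nrm (w - q) + e" using m(2) by linarith
  qed
  have upper: "nrm (w - r) \<le> sqrt d2"
  proof (rule field_le_epsilon)
    fix e0 :: real assume e0: "e0 > 0"
    define e where "e = e0 / 2"
    have e: "e > 0" using e0 e_def by simp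
    obtain N1 where N1: "\<forall>n\<ge>N1. nrm (mm n - r) < e" using r e by blast
    obtain N2 :: nat where N2: "1 / e^2 < real N2" using reals_Archimedean2 by blast
    define n where "n = max N1 N2"
    have "1 / (real n + 1) < e^2"
    proof -
      have "1 / e^2 < real n + 1" using N2 n_def by linarith
      then show ?thesis using e by (simp add: field_simps)
    qed
    then have "(nrm (w - mm n))^2 < d2 + e^2" using mm(2)[of n] by linarith
    also have "\<dots> \<le> (sqrt d2 + e)^2" using d2nn e by (simp add: power2_sum)
    finally have "nrm (w - mm n) < sqrt d2 + e"
      using e d2nn by (simp add: power_less_imp_less_base)
    moreover have "nrm (w - r) \<le> nrm (w - mm n) + nrm (mm n - r)" using nrm_diff_triangle by blast
    moreover have "nrm (mm n - r) < e" using N1 n_def by simp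
    ultimately show "nrm (w - r) \<le> sqrt d2 + e0" using e_def by linarith
  qed
  have orth: "\<forall>m\<in>M. ip m (w - r) = 0"
  proof
    fix m assume mM: "m \<in> M"
    show "ip m (w - r) = 0"
    proof (rule orth_from_min)
      fix t
      have "\<forall>e>0. \<exists>m'\<in>M. nrm ((r - sc t m) - m') < e"
      proof (intro allI impI)
        fix e :: real assume "e > 0"
        then obtain m' where m': "m' \<in> M" "nrm (r - m') < e" using approx by blast
        have "m' + sc (- 1) (sc t m) \<in> M" using Madd Msc m'(1) mM by blast
        moreover have "(r - sc t m) - (m' + sc (- 1) (sc t m)) = r - m'" by (simp add: sc_neg1)
        ultimately show "\<exists>m'\<in>M. nrm ((r - sc t m) - m') < e" using m'(2) by metis
      qed
      from lower[OF this] have "sqrt d2 \<le> nrm (w - (r - sc t m))" .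
      moreover have "w - (r - sc t m) = (w - r) + sc t m" by simp
      ultimately show "nrm (w - r) \<le> nrm ((w - r) + sc t m)" using upper by simp
    qed
  qed
  show ?thesis using approx orth by blast
qed

end


locale hstar =
  fixes sA :: "complex \<Rightarrow> 'a::ring \<Rightarrow> 'a" and ip :: "'a \<Rightarrow> 'a \<Rightarrow> complex"
  assumes ph: "proper_H_star_algebra sA ip"
begin

lemma hs: "H_star_algebra sA ip" using ph by (simp add: proper_H_star_algebra_def)

sublocale ips sA ip
  using hs unfolding H_star_algebra_def by unfold_locales auto

lemma sc_mult_left: "sA c (a * b) = sA c a * b" using hs unfolding H_star_algebra_def by blast
lemma sc_mult_right: "sA c (a * b) = a * sA c b" using hs unfolding H_star_algebra_def by blast
lemma submult: "nrm (a * b) \<le> nrm a * nrm b" using hs unfolding H_star_algebra_def nrm_def by blast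
lemma complete: "complete_wrt (inorm ip)" using hs unfolding H_star_algebra_def by blast
lemma adj_ex: "\<exists>a'. is_adjoint ip a a'" using hs unfolding H_star_algebra_def by blast
lemma proper: assumes "\<And>x. a * x = 0" shows "(a::'a) = 0"
  using ph assms unfolding proper_H_star_algebra_def by blast

lemma complete_seq:
  fixes X :: "nat \<Rightarrow> 'a"
  assumes "\<forall>e>0. \<exists>N. \<forall>m\<ge>N. \<forall>n\<ge>N. nrm (X m - X n) < e"
  shows "\<exists>l. \<forall>e>0. \<exists>N. \<forall>n\<ge>N. nrm (X n - l) < e"
proof -
  have "\<forall>X :: nat \<Rightarrow> 'a. (\<forall>e>0. \<exists>N. \<forall>m\<ge>N. \<forall>n\<ge>N. nrm (X m - X n) < e) \<longrightarrow>
       (\<exists>l. \<forall>e>0. \<exists>N. \<forall>n\<ge>N. nrm (X n - l) < e)"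
    using complete unfolding complete_wrt_def nrm_def by blast
  then show ?thesis using assms by blast
qed

abbreviation st where "st a \<equiv> adj ip a"

lemma adj_uniq:
  assumes "is_adjoint ip a a1" "is_adjoint ip a a2" shows "a1 = a2"
proof -
  have "(a1 - a2) * c = 0" for c
  proof -
    have "ip b (a1 * c) = ip b (a2 * c)" for b using assms unfolding is_adjoint_def by metis
    then have "ip (a1 * c - a2 * c) (a1 * c - a2 * c) = 0" by (simp add: ip_diff_right)
    then have "a1 * c - a2 * c = 0" by (rule ip_def0)
    then show ?thesis by (simp add: left_diff_distrib)
  qed
  then have "a1 - a2 = 0" by (rule proper)
  then show ?thesis by simp
qed

lemma adj_eq: "is_adjoint ip a a' \<Longrightarrow> st a = a'"
  unfolding adj_def using adj_uniq by blast

lemma adj_is: "is_adjoint ip a (st a)"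
  using adj_ex adj_eq by metis

lemma ad1: "ip (a * b) c = ip b (st a * c)"
  using adj_is unfolding is_adjoint_def by blast
lemma ad2: "ip (b * a) c = ip b (c * st a)"
  using adj_is unfolding is_adjoint_def by blast

lemma st_st[simp]: "st (st a) = a"
proof (rule adj_eq)
  show "is_adjoint ip (st a) a" unfolding is_adjoint_def
  proof (intro allI conjI)
    fix b c
    show "ip (st a * b) c = ip b (a * c)"
      using ad1[of a c b] ip_sym[of "st a * b" c] ip_sym[of b "a * c"] by simp
    show "ip (b * st a) c = ip b (c * a)"
      using ad2[of c a b] ip_sym[of "b * st a" c] ip_sym[of b "c * a"] by simp
  qed
qed

lemma st_mult: "st (a * b) = st b * st a"
proof (rule adj_eq)
  show "is_adjoint ip (a * b) (st b * st a)" unfolding is_adjoint_def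
  proof (intro allI conjI)
    fix x c
    have "ip (a * b * x) c = ip (a * (b * x)) c" by (simp add: mult.assoc)
    also have "\<dots> = ip (b * x) (st a * c)" by (rule ad1)
    also have "\<dots> = ip x (st b * (st a * c))" by (rule ad1)
    finally show "ip (a * b * x) c = ip x (st b * st a * c)" by (simp add: mult.assoc)
    have "ip (x * (a * b)) c = ip ((x * a) * b) c" by (simp add: mult.assoc)
    also have "\<dots> = ip (x * a) (c * st b)" by (rule ad2)
    also have "\<dots> = ip x ((c * st b) * st a)" by (rule ad2)
    finally show "ip (x * (a * b)) c = ip x (c * (st b * st a))" by (simp add: mult.assoc)
  qed
qed

lemma st_add: "st (a + b) = st a + st b"
proof (rule adj_eq)
  show "is_adjoint ip (a + b) (st a + st b)" unfolding is_adjoint_def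
  proof (intro allI conjI)
    fix x c
    have "ip ((a + b) * x) c = ip (a * x) c + ip (b * x) c" by (simp add: distrib_right ip_add_left)
    also have "\<dots> = ip x (st a * c) + ip x (st b * c)" by (simp only: ad1)
    finally show "ip ((a + b) * x) c = ip x ((st a + st b) * c)" by (simp add: distrib_right ip_add_right)
    have "ip (x * (a + b)) c = ip (x * a) c + ip (x * b) c" by (simp add: distrib_left ip_add_left)
    also have "\<dots> = ip x (c * st a) + ip x (c * st b)" by (simp only: ad2)
    finally show "ip (x * (a + b)) c = ip x (c * (st a + st b))" by (simp add: distrib_left ip_add_right)
  qed
qed

lemma st_sc: "st (sA c a) = sA (cnj c) (st a)"
proof (rule adj_eq)
  show "is_adjoint ip (sA c a) (sA (cnj c) (st a))" unfolding is_adjoint_def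
  proof (intro allI conjI)
    fix b d
    have "ip (sA c a * b) d = ip (sA c (a * b)) d" by (simp add: sc_mult_left)
    also have "\<dots> = cnj c * ip b (st a * d)" by (simp add: ip_sc_left ad1)
    also have "\<dots> = ip b (sA (cnj c) (st a) * d)" by (simp add: ip_sc_right sc_mult_left[symmetric])
    finally show "ip (sA c a * b) d = ip b (sA (cnj c) (st a) * d)" .
    have "ip (b * sA c a) d = ip (sA c (b * a)) d" by (simp add: sc_mult_right)
    also have "\<dots> = cnj c * ip b (d * st a)" by (simp add: ip_sc_left ad2)
    also have "\<dots> = ip b (d * sA (cnj c) (st a))" by (simp add: ip_sc_right sc_mult_right[symmetric])
    finally show "ip (b * sA c a) d = ip b (d * sA (cnj c) (st a))" .
  qed
qed

lemma st_zero[simp]: "st 0 = 0"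
  using st_add[of 0 0] by simp
lemma st_minus: "st (- a) = - st a"
  using st_add[of a "- a"] by (simp add: eq_neg_iff_add_eq_0 add.commute)
lemma st_diff: "st (a - b) = st a - st b"
  using st_add[of a "- b"] st_minus by simp

lemma mult_zero_cancel_right: "(\<And>x. x * a = 0) \<Longrightarrow> (a::'a) = 0"
proof -
  assume h: "\<And>x. x * a = 0"
  have aa: "a * st a = 0"
  proof -
    have "ip (a * st a) (a * st a) = ip ((a * st a) * a) a" by (simp add: ad2)
    also have "\<dots> = 0" using h by simp
    finally show ?thesis using ip_def0 by simp
  qed
  have "st a * v = 0" for v
  proof -
    have "ip (st a * v) (st a * v) = ip v (a * (st a * v))" using ad1[of "st a" v] by simp
    also have "a * (st a * v) = 0" using aa by (simp flip: mult.assoc)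
    finally show ?thesis using ip_def0 by simp
  qed
  then have "st a = 0" by (rule proper)
  then show "a = 0" using st_st[of a] by simp
qed

definition sc3 :: "complex \<Rightarrow> 'a \<times> 'a \<times> 'a \<Rightarrow> 'a \<times> 'a \<times> 'a" where
  "sc3 c p = (sA c (fst p), sA c (fst (snd p)), sA c (snd (snd p)))"
definition ip3 :: "'a \<times> 'a \<times> 'a \<Rightarrow> 'a \<times> 'a \<times> 'a \<Rightarrow> complex" where
  "ip3 p q = ip (fst p) (fst q) + ip (fst (snd p)) (fst (snd q)) + ip (snd (snd p)) (snd (snd q))"

lemma ip3_self: "ip3 p p = complex_of_real ((nrm (fst p))^2 + (nrm (fst (snd p)))^2 + (nrm (snd (snd p)))^2)"
  by (simp add: ip3_def ip_self_nrm)

lemma ips3: "ips sc3 ip3"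
proof
  show "cvs sc3" unfolding cvs_def sc3_def
    by (simp add: sc_mult sc_add_left sc_add_right prod_eq_iff)
  show "is_inner sc3 ip3" unfolding is_inner_def
  proof (intro conjI allI impI)
    fix x y z show "ip3 x (y + z) = ip3 x y + ip3 x z" by (simp add: ip3_def ip_add_right)
  next
    fix c x y show "ip3 x (sc3 c y) = c * ip3 x y" by (simp add: ip3_def sc3_def ip_sc_right algebra_simps)
  next
    fix x y show "ip3 y x = cnj (ip3 x y)"
      unfolding ip3_def using ip_sym[of "fst x"] ip_sym[of "fst (snd x)"] ip_sym[of "snd (snd x)"] by simp
  next
    fix x show "0 \<le> Re (ip3 x x)" by (simp add: ip3_self)
  next
    fix x assume "ip3 x x = 0"
    then have "(nrm (fst x))^2 + (nrm (fst (snd x)))^2 + (nrm (snd (snd x)))^2 = 0"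
      using ip3_self[of x] by (metis of_real_eq_0_iff)
    then have "nrm (fst x) = 0 \<and> nrm (fst (snd x)) = 0 \<and> nrm (snd (snd x)) = 0"
      by (metis add_nonneg_nonneg zero_le_power2 add_nonneg_eq_0_iff power_eq_0_iff zero_neq_numeral)
    then show "x = 0" by (simp add: nrm_eq_0 prod_eq_iff)
  qed
qed

interpretation T3: ips sc3 ip3 by (rule ips3)

lemma nrm3: "T3.nrm p = sqrt ((nrm (fst p))^2 + (nrm (fst (snd p)))^2 + (nrm (snd (snd p)))^2)"
  unfolding T3.nrm_def inorm_def by (simp add: ip3_self)

lemma nrm3_ge: "nrm (fst p) \<le> T3.nrm p" "nrm (fst (snd p)) \<le> T3.nrm p" "nrm (snd (snd p)) \<le> T3.nrm p"
  unfolding nrm3 by (auto intro!: real_le_rsqrt)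

lemma nrm3_le: "T3.nrm p \<le> nrm (fst p) + nrm (fst (snd p)) + nrm (snd (snd p))"
  unfolding nrm3 by (rule real_le_lsqrt) (auto simp: power2_sum)

lemma complete3: "complete_wrt (inorm ip3)"
  unfolding complete_wrt_def
proof (intro allI impI)
  fix X :: "nat \<Rightarrow> 'a \<times> 'a \<times> 'a"
  assume C0: "\<forall>e>0. \<exists>N. \<forall>m\<ge>N. \<forall>n\<ge>N. inorm ip3 (X m - X n) < e"
  then have C: "\<forall>e>0. \<exists>N. \<forall>m\<ge>N. \<forall>n\<ge>N. T3.nrm (X m - X n) < e" by (simp only: T3.nrm_def)
  have lim: "\<exists>l. \<forall>e>0. \<exists>N. \<forall>n\<ge>N. nrm (f (X n) - l) < e"
    if f: "\<And>p. nrm (f p) \<le> T3.nrm p" "\<And>p q. f p - f q = f (p - q)" for f :: "'a \<times> 'a \<times> 'a \<Rightarrow> 'a"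
  proof -
    have "\<forall>e>0. \<exists>N. \<forall>m\<ge>N. \<forall>n\<ge>N. nrm (f (X m) - f (X n)) < e"
    proof (intro allI impI)
      fix e :: real assume "e > 0"
      then obtain N where "\<forall>m\<ge>N. \<forall>n\<ge>N. T3.nrm (X m - X n) < e" using C by blast
      then have "\<forall>m\<ge>N. \<forall>n\<ge>N. nrm (f (X m) - f (X n)) < e"
      proof (intro allI impI)
        fix m n assume "m \<ge> N" "n \<ge> N"
        then have "T3.nrm (X m - X n) < e" using \<open>\<forall>m\<ge>N. \<forall>n\<ge>N. T3.nrm (X m - X n) < e\<close> by blast
        then show "nrm (f (X m) - f (X n)) < e" using f(1)[of "X m - X n"] f(2)[of "X m" "X n"] by simp
      qed
      then show "\<exists>N. \<forall>m\<ge>N. \<forall>n\<ge>N. nrm (f (X m) - f (X n)) < e" by blast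
    qed
    then show ?thesis by (rule complete_seq)
  qed
  obtain l1 where l1: "\<forall>e>0. \<exists>N. \<forall>n\<ge>N. nrm (fst (X n) - l1) < e"
    using lim[of fst, OF nrm3_ge(1)] by (simp, blast)
  obtain l2 where l2: "\<forall>e>0. \<exists>N. \<forall>n\<ge>N. nrm (fst (snd (X n)) - l2) < e"
    using lim[of "\<lambda>p. fst (snd p)", OF nrm3_ge(2)] by (simp, blast)
  obtain l3 where l3: "\<forall>e>0. \<exists>N. \<forall>n\<ge>N. nrm (snd (snd (X n)) - l3) < e"
    using lim[of "\<lambda>p. snd (snd p)", OF nrm3_ge(3)] by (simp, blast)
  show "\<exists>l. \<forall>e>0. \<exists>N. \<forall>n\<ge>N. inorm ip3 (X n - l) < e"
    unfolding T3.nrm_def[symmetric]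
  proof (rule exI[where x="(l1, l2, l3)"], intro allI impI)
    fix e :: real assume e: "e > 0"
    then have e3: "e / 3 > 0" by simp
    obtain N1 where N1: "\<forall>n\<ge>N1. nrm (fst (X n) - l1) < e / 3" using l1 e3 by blast
    obtain N2 where N2: "\<forall>n\<ge>N2. nrm (fst (snd (X n)) - l2) < e / 3" using l2 e3 by blast
    obtain N3 where N3: "\<forall>n\<ge>N3. nrm (snd (snd (X n)) - l3) < e / 3" using l3 e3 by blast
    show "\<exists>N. \<forall>n\<ge>N. T3.nrm (X n - (l1, l2, l3)) < e"
    proof (rule exI[where x="max N1 (max N2 N3)"], intro allI impI)
      fix n assume "n \<ge> max N1 (max N2 N3)"
      then have "nrm (fst (X n) - l1) < e / 3" "nrm (fst (snd (X n)) - l2) < e / 3"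
        "nrm (snd (snd (X n)) - l3) < e / 3" using N1 N2 N3 by auto
      then show "T3.nrm (X n - (l1, l2, l3)) < e"
        using nrm3_le[of "X n - (l1, l2, l3)"] by simp
    qed
  qed
qed

lemma zero_by_eps: "(\<And>e. e > 0 \<Longrightarrow> nrm a \<le> e * K) \<Longrightarrow> a = 0"
proof -
  assume h: "\<And>e. e > 0 \<Longrightarrow> nrm a \<le> e * K"
  have "nrm a \<le> 0"
  proof (rule field_le_epsilon)
    fix e :: real assume e: "e > 0"
    show "nrm a \<le> 0 + e"
    proof (cases "K > 0")
      case True
      then have "nrm a \<le> (e / K) * K" using h[of "e / K"] e by simp
      then show ?thesis using True by simp
    next
      case False
      then have "nrm a \<le> 1 * K" using h[of 1] by simp
      then show ?thesis using False e by simp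
    qed
  qed
  then have "nrm a = 0" using nrm_nonneg[of a] by linarith
  then show ?thesis using nrm_eq_0 by simp
qed

lemma cmod_zero_by_eps: "(\<And>e. e > 0 \<Longrightarrow> cmod z \<le> e * K) \<Longrightarrow> z = 0"
proof -
  assume h: "\<And>e. e > 0 \<Longrightarrow> cmod z \<le> e * K"
  have "cmod z \<le> 0"
  proof (rule field_le_epsilon)
    fix e :: real assume e: "e > 0"
    show "cmod z \<le> 0 + e"
    proof (cases "K > 0")
      case True
      then have "cmod z \<le> (e / K) * K" using h[of "e / K"] e by simp
      then show ?thesis using True by simp
    next
      case False
      then have "cmod z \<le> 1 * K" using h[of 1] by simp
      then show ?thesis using False e by simp
    qed
  qed
  then show ?thesis by simp
qed

lemma right_approx3:
  assumes e: "e > 0"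
  shows "\<exists>u. nrm (x1 - x1 * u) < e \<and> nrm (x2 - x2 * u) < e \<and> nrm (x3 - x3 * u) < e"
proof -
  define M where "M = {(x1 * u, x2 * u, x3 * u) | u. True}"
  have M0: "0 \<in> M" unfolding M_def by (rule CollectI, rule exI[where x=0]) (simp add: zero_prod_def)
  have Madd: "a + b \<in> M" if ab: "a \<in> M" "b \<in> M" for a b
  proof -
    obtain u v where "a = (x1 * u, x2 * u, x3 * u)" "b = (x1 * v, x2 * v, x3 * v)"
      using ab unfolding M_def by blast
    then have "a + b = (x1 * (u + v), x2 * (u + v), x3 * (u + v))" by (simp add: distrib_left)
    then show ?thesis unfolding M_def by blast
  qed
  have Msc: "sc3 c a \<in> M" if a: "a \<in> M" for c a
  proof -
    obtain u where "a = (x1 * u, x2 * u, x3 * u)" using a unfolding M_def by blast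
    then have "sc3 c a = (x1 * sA c u, x2 * sA c u, x3 * sA c u)" by (simp add: sc3_def sc_mult_right)
    then show ?thesis unfolding M_def by blast
  qed
  obtain r where r: "\<forall>e>0. \<exists>m\<in>M. T3.nrm (r - m) < e" "\<forall>m\<in>M. ip3 m ((x1, x2, x3) - r) = 0"
    using T3.proj_exists[OF complete3 M0 Madd Msc, of "(x1, x2, x3)"] by blast
  obtain r1 r2 r3 where rr: "r = (r1, r2, r3)" by (cases r) auto
  define s1 where "s1 = x1 - r1"
  define s2 where "s2 = x2 - r2"
  define s3 where "s3 = x3 - r3"
  define g where "g = st x1 * s1 + st x2 * s2 + st x3 * s3"
  have "ip u g = 0" for u
  proof -
    have "(x1 * u, x2 * u, x3 * u) \<in> M" unfolding M_def by blast
    then have "ip3 (x1 * u, x2 * u, x3 * u) (s1, s2, s3) = 0" using r(2) rr s1_def s2_def s3_def by simp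
    then show ?thesis by (simp add: ip3_def ad1 g_def ip_add_right)
  qed
  then have g0: "g = 0" using ip_def0 by blast
  have stg: "st s1 * x1 + st s2 * x2 + st s3 * x3 = 0"
  proof -
    have "st g = st s1 * x1 + st s2 * x2 + st s3 * x3" by (simp add: g_def st_add st_mult)
    then show ?thesis using g0 by simp
  qed
  define Q where "Q = st s1 * r1 + st s2 * r2 + st s3 * r3"
  define K where "K = nrm (st s1) + nrm (st s2) + nrm (st s3)"
  have Q0: "Q = 0"
  proof (rule zero_by_eps)
    fix e :: real assume e: "e > 0"
    obtain m where m: "m \<in> M" "T3.nrm (r - m) < e" using r(1) e by blast
    obtain u where mu: "m = (x1 * u, x2 * u, x3 * u)" using m(1) unfolding M_def by blast
    have d1: "nrm (r1 - x1 * u) < e" using m(2) nrm3_ge(1)[of "r - m"] rr mu by simp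
    have d2: "nrm (r2 - x2 * u) < e" using m(2) nrm3_ge(2)[of "r - m"] rr mu by simp
    have d3: "nrm (r3 - x3 * u) < e" using m(2) nrm3_ge(3)[of "r - m"] rr mu by simp
    have "Q = st s1 * (r1 - x1 * u) + st s2 * (r2 - x2 * u) + st s3 * (r3 - x3 * u) + (st s1 * x1 + st s2 * x2 + st s3 * x3) * u"
      by (simp add: Q_def algebra_simps)
    then have Qe: "Q = st s1 * (r1 - x1 * u) + st s2 * (r2 - x2 * u) + st s3 * (r3 - x3 * u)"
      using stg by simp
    have "nrm Q \<le> nrm (st s1 * (r1 - x1 * u)) + nrm (st s2 * (r2 - x2 * u)) + nrm (st s3 * (r3 - x3 * u))"
      unfolding Qe by (meson add_mono nrm_triangle order_trans order_refl)
    also have "\<dots> \<le> nrm (st s1) * e + nrm (st s2) * e + nrm (st s3) * e"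
      using submult d1 d2 d3
      by (intro add_mono order_trans[OF submult] mult_left_mono) (auto simp: less_imp_le)
    finally show "nrm Q \<le> e * K" by (simp add: K_def algebra_simps)
  qed
  define P where "P = st s1 * s1 + st s2 * s2 + st s3 * s3"
  have P0: "P = 0"
  proof -
    have "P = (st s1 * x1 + st s2 * x2 + st s3 * x3) - Q"
      by (simp add: P_def Q_def s1_def s2_def s3_def algebra_simps)
    then show ?thesis using stg Q0 by simp
  qed
  have sv0: "s1 * v = 0 \<and> s2 * v = 0 \<and> s3 * v = 0" for v
  proof -
    have "ip v (P * v) = ip (s1 * v) (s1 * v) + ip (s2 * v) (s2 * v) + ip (s3 * v) (s3 * v)"
      by (simp add: P_def distrib_right ip_add_right ad1 mult.assoc)
    then have "complex_of_real ((nrm (s1 * v))^2 + (nrm (s2 * v))^2 + (nrm (s3 * v))^2) = 0"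
      using P0 by (simp add: ip_self_nrm)
    then have "(nrm (s1 * v))^2 + (nrm (s2 * v))^2 + (nrm (s3 * v))^2 = 0" by (metis of_real_eq_0_iff)
    then have "nrm (s1 * v) = 0 \<and> nrm (s2 * v) = 0 \<and> nrm (s3 * v) = 0"
      by (metis add_nonneg_nonneg zero_le_power2 add_nonneg_eq_0_iff power_eq_0_iff)
    then show ?thesis using nrm_eq_0 by simp
  qed
  have "s1 = 0" "s2 = 0" "s3 = 0" using sv0 proper by blast+
  then have rx: "r1 = x1" "r2 = x2" "r3 = x3" using s1_def s2_def s3_def by simp_all
  obtain m where m: "m \<in> M" "T3.nrm (r - m) < e" using r(1) e by blast
  obtain u where mu: "m = (x1 * u, x2 * u, x3 * u)" using m(1) unfolding M_def by blast
  show ?thesis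
  proof (rule exI[where x=u], intro conjI)
    show "nrm (x1 - x1 * u) < e" using m(2) nrm3_ge(1)[of "r - m"] rr mu rx by simp
    show "nrm (x2 - x2 * u) < e" using m(2) nrm3_ge(2)[of "r - m"] rr mu rx by simp
    show "nrm (x3 - x3 * u) < e" using m(2) nrm3_ge(3)[of "r - m"] rr mu rx by simp
  qed
qed

lemma left_approx:
  assumes e: "e > 0"
  shows "\<exists>u. nrm (x - u * x) < e"
proof -
  define M where "M = {u * x | u. True}"
  have M0: "0 \<in> M" unfolding M_def by (rule CollectI, rule exI[where x=0]) simp
  have Madd: "a + b \<in> M" if ab: "a \<in> M" "b \<in> M" for a b
  proof -
    obtain u v where "a = u * x" "b = v * x" using ab unfolding M_def by blast
    then have "a + b = (u + v) * x" by (simp add: distrib_right)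
    then show ?thesis unfolding M_def by blast
  qed
  have Msc: "sA c a \<in> M" if a: "a \<in> M" for c a
  proof -
    obtain u where "a = u * x" using a unfolding M_def by blast
    then have "sA c a = sA c u * x" by (simp add: sc_mult_left)
    then show ?thesis unfolding M_def by blast
  qed
  obtain r where r: "\<forall>e>0. \<exists>m\<in>M. nrm (r - m) < e" "\<forall>m\<in>M. ip m (x - r) = 0"
    using proj_exists[OF complete M0 Madd Msc, of x] by blast
  define s where "s = x - r"
  have "ip u (s * st x) = 0" for u
  proof -
    have "u * x \<in> M" unfolding M_def by blast
    then have "ip (u * x) s = 0" using r(2) s_def by simp
    then show ?thesis by (simp add: ad2)
  qed
  then have sx: "s * st x = 0" using ip_def0 by blast
  have xs: "x * st s = 0" using arg_cong[OF sx, of st] by (simp add: st_mult)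
  have rs: "r * st s = 0"
  proof (rule zero_by_eps)
    fix e :: real assume e: "e > 0"
    obtain m where m: "m \<in> M" "nrm (r - m) < e" using r(1) e by blast
    obtain u where mu: "m = u * x" using m(1) unfolding M_def by blast
    have "r * st s = (r - u * x) * st s + u * (x * st s)" by (simp add: algebra_simps)
    then have "r * st s = (r - u * x) * st s" using xs by simp
    then have "nrm (r * st s) \<le> nrm (r - u * x) * nrm (st s)" using submult by simp
    also have "\<dots> \<le> e * nrm (st s)" using m(2) mu by (simp add: mult_right_mono)
    finally show "nrm (r * st s) \<le> e * nrm (st s)" .
  qed
  have sr: "s * st r = 0" using arg_cong[OF rs, of st] by (simp add: st_mult)
  have ss: "s * st s = 0"
  proof -
    have "s * st s = s * st x - s * st r" by (simp add: s_def st_diff right_diff_distrib)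
    then show ?thesis using sx sr by simp
  qed
  have "st s * v = 0" for v
  proof -
    have "ip (st s * v) (st s * v) = ip v (s * (st s * v))" using ad1[of "st s" v] by simp
    also have "s * (st s * v) = 0" using ss by (simp flip: mult.assoc)
    finally show ?thesis using ip_def0 by simp
  qed
  then have "st s = 0" by (rule proper)
  then have "s = 0" using st_st[of s] by simp
  then have rx: "r = x" using s_def by simp
  obtain m where m: "m \<in> M" "nrm (r - m) < e" using r(1) e by blast
  obtain u where mu: "m = u * x" using m(1) unfolding M_def by blast
  show ?thesis using m(2) mu rx by blast
qed

lemma isometry_identity:
  "ip (st x - st x * st u) (st x - st x * st u) = ip (x - u * x) (x - u * x) + (ip (st x) (st x) - ip x x)"
proof -
  define X where "X = st x"
  have T2: "ip (X * st u) X = cnj (ip (u * x) x)"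
  proof -
    have "ip (X * st u) X = ip X (X * u)" using ad2[of X "st u" X] by simp
    also have "\<dots> = ip (x * X) u" using ad1[of x X u] X_def by simp
    also have "\<dots> = cnj (ip u (x * X))" by (rule ip_sym)
    also have "ip u (x * X) = ip (u * x) x" using ad2[of u x x] X_def by simp
    finally show ?thesis .
  qed
  have T1: "ip X (X * st u) = ip (u * x) x"
    using T2 ip_sym[of "X * st u" X] by simp
  have S1: "ip x (u * x) = cnj (ip (u * x) x)" by (rule ip_sym)
  have T3: "ip (X * st u) (X * st u) = ip (st u * u) (x * X)"
  proof -
    have "ip (X * st u) (X * st u) = ip (st u) (x * (X * st u))" using ad1[of X "st u"] X_def by simp
    also have "\<dots> = ip (st u) ((x * X) * st u)" by (simp add: mult.assoc)
    also have "\<dots> = ip (st u * u) (x * X)" using ad2[of "st u" u "x * X"] by simp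
    finally show ?thesis .
  qed
  have S3: "ip (u * x) (u * x) = ip (st u * u) (x * X)"
  proof -
    have "ip (u * x) (u * x) = ip u ((u * x) * X)" using ad2[of u x "u * x"] X_def by simp
    also have "\<dots> = ip u (u * (x * X))" by (simp add: mult.assoc)
    also have "\<dots> = ip (st u * u) (x * X)" using ad1[of "st u" u "x * X"] by simp
    finally show ?thesis .
  qed
  have "ip (X - X * st u) (X - X * st u) = ip X X - ip X (X * st u) - ip (X * st u) X + ip (X * st u) (X * st u)"
    by (simp add: ip_diff_left ip_diff_right)
  moreover have "ip (x - u * x) (x - u * x) = ip x x - ip x (u * x) - ip (u * x) x + ip (u * x) (u * x)"
    by (simp add: ip_diff_left ip_diff_right)
  ultimately show ?thesis using T1 T2 T3 S1 S3 X_def by simp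
qed

lemma nrm_st: "nrm (st x) = nrm x"
proof -
  define c where "c = (nrm (st x))^2 - (nrm x)^2"
  have key: "(nrm (st x - st x * st u))^2 = (nrm (x - u * x))^2 + c" for u
  proof -
    have "complex_of_real ((nrm (st x - st x * st u))^2) = complex_of_real ((nrm (x - u * x))^2 + c)"
      using isometry_identity[of x u] by (simp add: ip_self_nrm c_def)
    then show ?thesis using of_real_eq_iff by blast
  qed
  have c1: "c \<ge> 0"
  proof (rule field_le_epsilon)
    fix e :: real assume e: "e > 0"
    obtain u where u: "nrm (x - u * x) < sqrt e" using left_approx e by (meson real_sqrt_gt_zero)
    have "(nrm (x - u * x))^2 < (sqrt e)^2" by (rule power_strict_mono) (use u in auto)
    then have "(nrm (x - u * x))^2 < e" using e by simp
    then show "0 \<le> c + e" using key[of u] zero_le_power2[of "nrm (st x - st x * st u)"] by linarith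
  qed
  have c2: "c \<le> 0"
  proof (rule field_le_epsilon)
    fix e :: real assume e: "e > 0"
    obtain w where w: "nrm (st x - st x * w) < sqrt e"
      using right_approx3[of "sqrt e" "st x" 0 0] e by auto
    have "(nrm (st x - st x * w))^2 < (sqrt e)^2" by (rule power_strict_mono) (use w in auto)
    then have "(nrm (st x - st x * w))^2 < e" using e by simp
    moreover have "(nrm (st x - st x * w))^2 = (nrm (x - st w * x))^2 + c" using key[of "st w"] by simp
    ultimately show "c \<le> 0 + e" using zero_le_power2[of "nrm (x - st w * x)"] by linarith
  qed
  have "(nrm (st x))^2 = (nrm x)^2" using c1 c2 c_def by simp
  then show ?thesis by (metis nrm_nonneg power2_eq_imp_eq)
qed

lemma zero3:
  assumes "a1 * b1 + a2 * b2 + a3 * b3 = 0"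
  shows "ip (st a1) b1 + ip (st a2) b2 + ip (st a3) b3 = 0"
proof (rule cmod_zero_by_eps)
  fix e :: real assume e: "e > 0"
  obtain u where u: "nrm (st a1 - st a1 * u) < e" "nrm (st a2 - st a2 * u) < e" "nrm (st a3 - st a3 * u) < e"
    using right_approx3[OF e] by blast
  have dec: "ip (st a) b = ip u (a * b) + ip (st a - st a * u) b" for a b
    using ad1[of "st a" u b] by (simp add: ip_diff_left)
  have "ip u (a1 * b1) + ip u (a2 * b2) + ip u (a3 * b3) = 0"
    using assms by (simp flip: ip_add_right)
  then have "ip (st a1) b1 + ip (st a2) b2 + ip (st a3) b3 =
      ip (st a1 - st a1 * u) b1 + ip (st a2 - st a2 * u) b2 + ip (st a3 - st a3 * u) b3"
    unfolding dec by (simp add: algebra_simps)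
  then have "cmod (ip (st a1) b1 + ip (st a2) b2 + ip (st a3) b3) =
      cmod (ip (st a1 - st a1 * u) b1 + ip (st a2 - st a2 * u) b2 + ip (st a3 - st a3 * u) b3)" by simp
  also have "\<dots> \<le> cmod (ip (st a1 - st a1 * u) b1) + cmod (ip (st a2 - st a2 * u) b2) + cmod (ip (st a3 - st a3 * u) b3)"
    by (intro order_trans[OF norm_triangle_ineq] add_right_mono norm_triangle_ineq)
  also have "\<dots> \<le> e * nrm b1 + e * nrm b2 + e * nrm b3"
    using u by (intro add_mono order_trans[OF cs] mult_right_mono) (auto simp: less_imp_le)
  finally show "cmod (ip (st a1) b1 + ip (st a2) b2 + ip (st a3) b3) \<le> e * (nrm b1 + nrm b2 + nrm b3)"
    by (simp add: algebra_simps)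
qed

lemma sp_prod: "sp ip (a * b) = ip (st a) b"
proof -
  have uniq: "z = ip (st a) b" if ex: "\<exists>a' b'. a * b = a' * b' \<and> z = ip (st a') b'" for z
  proof -
    obtain a' b' where ab: "a * b = a' * b'" "z = ip (st a') b'" using ex by blast
    have "a * b + (- a') * b' + 0 * 0 = 0" using ab by simp
    from zero3[OF this] have "ip (st a) b - ip (st a') b' = 0" by (simp add: st_minus ip_minus_left)
    then show ?thesis using ab by simp
  qed
  show ?thesis unfolding sp_def
    by (rule someI2[of _ "ip (st a) b"]) (blast, rule uniq)
qed

end


context ips
begin

lemma riesz:
  assumes comp: "complete_wrt (inorm ip)"
    and add: "\<And>a b. phi (a + b) = phi a + phi b"
    and hom: "\<And>c a. phi (sc c a) = c * phi a"
    and bnd: "\<And>a. cmod (phi a) \<le> C * nrm a"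
  shows "\<exists>x. \<forall>z. phi z = ip x z"
proof (cases "\<forall>z. phi z = 0")
  case True then show ?thesis by (intro exI[where x=0]) simp
next
  case False
  then obtain w where w: "phi w \<noteq> 0" by blast
  have phi0: "phi 0 = 0" using hom[of 0 0] by simp
  have phidiff: "phi (a - b) = phi a - phi b" for a b
  proof -
    have "phi (a + sc (-1) b) = phi a - phi b" using add hom by simp
    then show ?thesis by (simp add: sc_neg1)
  qed
  define N where "N = {z. phi z = 0}"
  have N0: "0 \<in> N" using phi0 N_def by simp
  have Nadd: "a + b \<in> N" if "a \<in> N" "b \<in> N" for a b using that add N_def by simp
  have Nsc: "sc c a \<in> N" if "a \<in> N" for c a using that hom N_def by simp
  obtain r where r: "\<forall>e>0. \<exists>m\<in>N. nrm (r - m) < e" "\<forall>m\<in>N. ip m (w - r) = 0"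
    using proj_exists[OF comp N0 Nadd Nsc, of w] by blast
  have phir: "phi r = 0"
  proof -
    have "cmod (phi r) \<le> 0"
    proof (rule field_le_epsilon)
      fix e :: real assume e: "e > 0"
      define e' where "e' = e / (abs C + 1)"
      have e': "e' > 0" using e e'_def by (simp add: add_nonneg_pos)
      obtain m where m: "m \<in> N" "nrm (r - m) < e'" using r(1) e' by blast
      have "phi r = phi (r - m)" using m(1) N_def phidiff by simp
      then have "cmod (phi r) \<le> C * nrm (r - m)" using bnd by simp
      also have "\<dots> \<le> (abs C + 1) * e'"
        using m(2) by (intro order_trans[OF mult_right_mono[of C "abs C + 1"]] mult_left_mono) auto
      also have "\<dots> = e" using e'_def by simp
      finally show "cmod (phi r) \<le> 0 + e" by simp
    qed
    then show ?thesis by simp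
  qed
  define v where "v = w - r"
  have phiv: "phi v = phi w" using phir phidiff v_def by simp
  have v0: "v \<noteq> 0" using phiv w phi0 by auto
  have vv: "ip v v \<noteq> 0" using v0 ip_def0 by blast
  have vvr: "cnj (ip v v) = ip v v" using ip_sym[of v v] by simp
  define c where "c = cnj (phi v / ip v v)"
  show ?thesis
  proof (rule exI[where x="sc c v"], rule allI)
    fix z
    define m where "m = z - sc (phi z / phi v) v"
    have "phi m = 0" using phiv w by (simp add: m_def phidiff hom)
    then have "ip m v = 0" using r(2) N_def v_def by simp
    then have "ip z v = cnj (phi z / phi v) * ip v v" by (simp add: m_def ip_diff_left ip_sc_left)
    then have "cnj (ip z v) = (phi z / phi v) * ip v v" using vvr by simp
    then have "ip v z = (phi z / phi v) * ip v v" using ip_sym[of z v] by simp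
    then have "phi z = phi v * ip v z / ip v v" using vv w phiv by (simp add: field_simps)
    also have "\<dots> = ip (sc c v) z" by (simp add: c_def ip_sc_left)
    finally show "phi z = ip (sc c v) z" .
  qed
qed

end

context hstar
begin

lemma tc_mem: "a * b \<in> trace_class" unfolding trace_class_def by blast
lemma tc_ex: "p \<in> trace_class \<Longrightarrow> \<exists>a b. p = a * b" unfolding trace_class_def by blast

lemma sp_add:
  assumes "p \<in> trace_class" "q \<in> trace_class" "p + q \<in> trace_class"
  shows "sp ip (p + q) = sp ip p + sp ip q"
proof -
  obtain a1 b1 where 1: "p = a1 * b1" using tc_ex assms(1) by blast
  obtain a2 b2 where 2: "q = a2 * b2" using tc_ex assms(2) by blast
  obtain a3 b3 where 3: "p + q = a3 * b3" using tc_ex assms(3) by blast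
  have "a3 * b3 + (- a1) * b1 + (- a2) * b2 = 0" using 1 2 3 by (simp add: algebra_simps)
  from zero3[OF this] have "ip (st a3) b3 - ip (st a1) b1 - ip (st a2) b2 = 0"
    by (simp add: st_minus ip_minus_left)
  then have e: "ip (st a3) b3 = ip (st a1) b1 + ip (st a2) b2" by (simp add: algebra_simps)
  have "sp ip (p + q) = ip (st a3) b3" using 3 by (simp add: sp_prod)
  moreover have "sp ip p = ip (st a1) b1" "sp ip q = ip (st a2) b2" using 1 2 by (simp_all add: sp_prod)
  ultimately show ?thesis using e by simp
qed

lemma sp_sc:
  assumes "p \<in> trace_class" shows "sp ip (sA c p) = c * sp ip p"
proof -
  obtain a b where 1: "p = a * b" using tc_ex assms by blast
  have "sA c p = sA c a * b" using 1 by (simp add: sc_mult_left)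
  then show ?thesis using 1 by (simp add: sp_prod st_sc ip_sc_left)
qed

lemma tc_sc: "p \<in> trace_class \<Longrightarrow> sA c p \<in> trace_class"
  using tc_ex tc_mem sc_mult_left by metis

lemma sp_zero: "sp ip 0 = 0"
  using sp_prod[of 0 0] by simp

end

locale hmod = hstar sA ip for sA :: "complex \<Rightarrow> 'a::ring \<Rightarrow> 'a" and ip +
  fixes sL :: "complex \<Rightarrow> 'b::ab_group_add \<Rightarrow> 'b" and act :: "'b \<Rightarrow> 'a \<Rightarrow> 'b" and br :: "'b \<Rightarrow> 'b \<Rightarrow> 'a"
  assumes hm: "Hilbert_module sA ip sL act br"
begin

lemmas hmu = hm[unfolded Hilbert_module_def]
lemmas br_tc_all = hmu[THEN conjunct2, THEN conjunct2, THEN conjunct2, THEN conjunct2, THEN conjunct2, THEN conjunct1]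
lemmas br_sc_right_all = hmu[THEN conjunct2, THEN conjunct2, THEN conjunct2, THEN conjunct2, THEN conjunct2, THEN conjunct2, THEN conjunct1]
lemmas br_add_right_all = hmu[THEN conjunct2, THEN conjunct2, THEN conjunct2, THEN conjunct2, THEN conjunct2, THEN conjunct2, THEN conjunct2, THEN conjunct1]
lemmas br_act_right_all = hmu[THEN conjunct2, THEN conjunct2, THEN conjunct2, THEN conjunct2, THEN conjunct2, THEN conjunct2, THEN conjunct2, THEN conjunct2, THEN conjunct1]
lemmas br_adj_all = hmu[THEN conjunct2, THEN conjunct2, THEN conjunct2, THEN conjunct2, THEN conjunct2, THEN conjunct2, THEN conjunct2, THEN conjunct2, THEN conjunct2, THEN conjunct1]
lemmas L_inner = hmu[THEN conjunct2, THEN conjunct2, THEN conjunct2, THEN conjunct2, THEN conjunct2, THEN conjunct2, THEN conjunct2, THEN conjunct2, THEN conjunct2, THEN conjunct2, THEN conjunct1]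
lemmas L_complete = hmu[THEN conjunct2, THEN conjunct2, THEN conjunct2, THEN conjunct2, THEN conjunct2, THEN conjunct2, THEN conjunct2, THEN conjunct2, THEN conjunct2, THEN conjunct2, THEN conjunct2, THEN conjunct1]
lemmas br_pos_all = hmu[THEN conjunct2, THEN conjunct2, THEN conjunct2, THEN conjunct2, THEN conjunct2, THEN conjunct2, THEN conjunct2, THEN conjunct2, THEN conjunct2, THEN conjunct2, THEN conjunct2, THEN conjunct2]
lemmas L_cvs = hmu[THEN conjunct1]

sublocale L: ips sL "\<lambda>x y. sp ip (br x y)"
  using L_cvs L_inner by unfold_locales

lemma br_tc: "br x y \<in> trace_class" using br_tc_all by blast
lemma br_sc_right: "br x (sL c y) = sA c (br x y)" using br_sc_right_all by blast
lemma br_add_right: "br x (y + z) = br x y + br x z" using br_add_right_all by blast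
lemma br_adj: "st (br x y) = br y x" using br_adj_all by blast
lemma br_pos0: "x \<noteq> 0 \<Longrightarrow> \<exists>a. a \<noteq> 0 \<and> br x x = st a * a" using br_pos_all by blast

lemma br_add_left: "br (x + y) z = br x z + br y z"
proof -
  have "br (x + y) z = st (br z (x + y))" using br_adj by simp
  also have "\<dots> = st (br z x) + st (br z y)" by (simp add: br_add_right st_add)
  finally show ?thesis using br_adj by simp
qed

lemma br_sc_left: "br (sL c x) y = sA (cnj c) (br x y)"
proof -
  have "br (sL c x) y = st (br y (sL c x))" using br_adj by simp
  also have "\<dots> = sA (cnj c) (st (br y x))" by (simp add: br_sc_right st_sc)
  finally show ?thesis using br_adj by simp
qed

lemma br_zero_left[simp]: "br 0 y = 0"
  using br_add_left[of 0 0 y] by simp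

lemma br_diff_left: "br (x - x0) y = br x y - br x0 y"
  using br_add_left[of "x - x0" x0 y] by simp

lemma Lnorm_eq: "Lnorm ip br x = L.nrm x"
  by (simp add: Lnorm_def L.nrm_def)

lemma br_pos: "\<exists>e. br x x = st e * e \<and> nrm e = L.nrm x"
proof (cases "x = 0")
  case True then show ?thesis by (intro exI[where x=0]) simp
next
  case False
  then obtain a where a: "br x x = st a * a" using br_pos0 by blast
  have "(L.nrm x)^2 = Re (sp ip (br x x))" by (rule L.nrm_sq)
  also have "\<dots> = (nrm a)^2" using a by (simp add: sp_prod nrm_sq)
  finally have "nrm a = L.nrm x" by (metis L.nrm_nonneg nrm_nonneg power2_eq_imp_eq)
  then show ?thesis using a by blast
qed

context
  fixes S :: "'a \<Rightarrow> 'a" and K :: real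
  assumes S_add: "\<And>x y. S (x + y) = S x + S y"
    and S_sc: "\<And>c x. S (sA c x) = sA c (S x)"
    and S_mult: "\<And>x y. S (x * y) = S x * y"
    and S_bnd: "\<And>x. nrm (S x) \<le> K * nrm x"
    and K0: "K \<ge> 0"
begin

definition Fs where "Fs z y = sp ip (S (br z y))"

lemma S_tc: "p \<in> trace_class \<Longrightarrow> S p \<in> trace_class"
  using tc_ex tc_mem S_mult by metis

lemma Fs_add_left: "Fs (z1 + z2) y = Fs z1 y + Fs z2 y"
  unfolding Fs_def br_add_left S_add
  by (rule sp_add) (auto intro: S_tc br_tc simp flip: S_add br_add_left)

lemma Fs_add_right: "Fs z (y1 + y2) = Fs z y1 + Fs z y2"
  unfolding Fs_def br_add_right S_add
  by (rule sp_add) (auto intro: S_tc br_tc simp flip: S_add br_add_right)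

lemma Fs_sc_left: "Fs (sL c z) y = cnj c * Fs z y"
  unfolding Fs_def br_sc_left S_sc by (rule sp_sc) (intro S_tc br_tc)

lemma Fs_sc_right: "Fs z (sL c y) = c * Fs z y"
  unfolding Fs_def br_sc_right S_sc by (rule sp_sc) (intro S_tc br_tc)

lemma Fs_diag: "cmod (Fs w w) \<le> K * (L.nrm w)^2"
proof -
  obtain e where e: "br w w = st e * e" "nrm e = L.nrm w" using br_pos by blast
  have "Fs w w = ip (st (S (st e))) e" unfolding Fs_def e(1) S_mult by (rule sp_prod)
  then have "cmod (Fs w w) \<le> nrm (st (S (st e))) * nrm e" using cs by simp
  also have "\<dots> = nrm (S (st e)) * nrm e" by (simp add: nrm_st)
  also have "\<dots> \<le> (K * nrm (st e)) * nrm e" by (intro mult_right_mono S_bnd) simp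
  also have "\<dots> = K * (L.nrm w)^2" using e(2) by (simp add: nrm_st power2_eq_square)
  finally show ?thesis .
qed

lemma Fs_expand:
  "Fs (z + sL c y) (z + sL c y) = Fs z z + c * Fs z y + cnj c * Fs y z + (cnj c * c) * Fs y y"
  by (simp add: Fs_add_left Fs_add_right Fs_sc_left Fs_sc_right algebra_simps)

lemma Fs_polar:
  "Fs z y = (Fs (z + sL 1 y) (z + sL 1 y) - \<i> * Fs (z + sL \<i> y) (z + sL \<i> y)
     - Fs (z + sL (-1) y) (z + sL (-1) y) + \<i> * Fs (z + sL (-\<i>) y) (z + sL (-\<i>) y)) / 4"
  unfolding Fs_expand by (simp add: algebra_simps)

lemma Fs_bound: "cmod (Fs z y) \<le> K * (L.nrm z + L.nrm y)^2"
proof -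
  have b: "cmod (Fs (z + sL c y) (z + sL c y)) \<le> K * (L.nrm z + L.nrm y)^2" if c: "cmod c = 1" for c
  proof -
    have "L.nrm (z + sL c y) \<le> L.nrm z + L.nrm y"
      using L.nrm_triangle[of z "sL c y"] L.nrm_sc[of c y] c by simp
    then have "(L.nrm (z + sL c y))^2 \<le> (L.nrm z + L.nrm y)^2" by (simp add: power_mono)
    then show ?thesis using Fs_diag[of "z + sL c y"] K0 by (meson mult_left_mono order_trans)
  qed
  define E1 where "E1 = Fs (z + sL 1 y) (z + sL 1 y)"
  define E2 where "E2 = Fs (z + sL \<i> y) (z + sL \<i> y)"
  define E3 where "E3 = Fs (z + sL (-1) y) (z + sL (-1) y)"
  define E4 where "E4 = Fs (z + sL (-\<i>) y) (z + sL (-\<i>) y)"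
  have "Fs z y = (E1 - \<i> * E2 - E3 + \<i> * E4) / 4"
    unfolding E1_def E2_def E3_def E4_def by (rule Fs_polar)
  then have "cmod (Fs z y) = cmod ((E1 - \<i> * E2 - E3 + \<i> * E4) / 4)" by (rule arg_cong)
  also have "\<dots> = cmod (E1 - \<i> * E2 - E3 + \<i> * E4) / 4" by (simp only: norm_divide) simp
  also have "cmod (E1 - \<i> * E2 - E3 + \<i> * E4) \<le> cmod E1 + cmod E2 + cmod E3 + cmod E4"
  proof -
    have "cmod (E1 - \<i> * E2 - E3 + \<i> * E4) \<le> cmod (E1 - \<i> * E2 - E3) + cmod (\<i> * E4)" by (rule norm_triangle_ineq)
    also have "cmod (E1 - \<i> * E2 - E3) \<le> cmod (E1 - \<i> * E2) + cmod E3" by (rule norm_triangle_ineq4)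
    also have "cmod (E1 - \<i> * E2) \<le> cmod E1 + cmod (\<i> * E2)" by (rule norm_triangle_ineq4)
    finally show ?thesis by (simp add: norm_mult)
  qed
  also have "cmod E1 + cmod E2 + cmod E3 + cmod E4 \<le> 4 * (K * (L.nrm z + L.nrm y)^2)"
    using b[of 1] b[of "\<i>"] b[of "-1"] b[of "-\<i>"] unfolding E1_def E2_def E3_def E4_def by simp
  finally show ?thesis by simp
qed

lemma Fs_zero_left: "Fs 0 y = 0"
  using Fs_add_left[of 0 0 y] by simp

lemma Fs_lin_bound: "cmod (Fs z y) \<le> (K * (1 + L.nrm y)^2) * L.nrm z"
proof (cases "z = 0")
  case True then show ?thesis by (simp add: Fs_zero_left)
next
  case False
  define t where "t = L.nrm z"
  have t: "t > 0" using False L.nrm_eq_0 L.nrm_nonneg t_def by (metis less_eq_real_def)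
  define z' where "z' = sL (complex_of_real (1 / t)) z"
  have zz: "z = sL (complex_of_real t) z'"
    using t by (simp add: z'_def L.sc_mult[symmetric])
  have "cmod (complex_of_real (1 / t)) = 1 / t" using t by (simp only: norm_of_real) simp
  then have nz': "L.nrm z' = 1" using t unfolding z'_def L.nrm_sc by (simp add: t_def)
  have "Fs z y = complex_of_real t * Fs z' y" by (subst zz) (simp add: Fs_sc_left)
  then have "cmod (Fs z y) = t * cmod (Fs z' y)" using t by (simp add: norm_mult)
  also have "\<dots> \<le> t * (K * (1 + L.nrm y)^2)" using Fs_bound[of z' y] nz' t by (simp add: mult_left_mono)
  finally show ?thesis by (simp add: t_def mult.commute)
qed

lemma Fs_rep: "\<exists>w. \<forall>z. Fs z y = sp ip (br z w)"
proof -
  have "\<exists>x. \<forall>z. cnj (Fs z y) = sp ip (br x z)"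
  proof (rule L.riesz[where C="K * (1 + L.nrm y)^2"])
    show "complete_wrt (inorm (\<lambda>x y. sp ip (br x y)))" by (rule L_complete)
    show "cnj (Fs (a + b) y) = cnj (Fs a y) + cnj (Fs b y)" for a b by (simp add: Fs_add_left)
    show "cnj (Fs (sL c a) y) = c * cnj (Fs a y)" for c a by (simp add: Fs_sc_left)
    show "cmod (cnj (Fs a y)) \<le> K * (1 + L.nrm y)^2 * L.nrm a" for a using Fs_lin_bound by simp
  qed
  then obtain x where x: "\<And>z. cnj (Fs z y) = sp ip (br x z)" by blast
  have "Fs z y = sp ip (br z x)" for z
  proof -
    have "Fs z y = cnj (sp ip (br x z))" using x[of z] by (metis complex_cnj_cnj)
    also have "\<dots> = sp ip (br z x)" using L.ip_sym[of x z] by simp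
    finally show ?thesis .
  qed
  then show ?thesis by blast
qed

end

lemma sp_S_rep:
  assumes S: "S \<in> C_alg sA ip"
  shows "\<exists>w. \<forall>z. sp ip (S (br z y)) = sp ip (br z w)"
proof -
  have bo: "bounded_op sA ip S" and Sm: "\<And>x y. S (x * y) = S x * y"
    using S unfolding C_alg_def by blast+
  have Sa: "\<And>x y. S (x + y) = S x + S y" and Ss: "\<And>c x. S (sA c x) = sA c (S x)"
    using bo unfolding bounded_op_def by blast+
  obtain K where K: "\<And>x. nrm (S x) \<le> K * nrm x" using bo unfolding bounded_op_def nrm_def by blast
  have K': "nrm (S x) \<le> max K 0 * nrm x" for x
    using K[of x] by (meson max.cobounded1 mult_right_mono nrm_nonneg order_trans)
  have K0: "0 \<le> max K 0" by simp
  from Fs_rep[OF Sa Ss Sm K' K0, of y] show ?thesis by (simp add: Fs_def[OF Sa Ss Sm K' K0])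
qed

definition Phi :: "'b \<Rightarrow> 'b \<Rightarrow> complex" where "Phi x = (\<lambda>y. sp ip (br x y))"

definition Kset :: "('b \<Rightarrow> complex) set" where
  "Kset = {g. (\<forall>y z. g (y + z) = g y + g z) \<and> (\<forall>c y. g (sL c y) = c * g y) \<and> (\<forall>y. cmod (g y) \<le> L.nrm y)}"

abbreviation PT :: "('b \<Rightarrow> complex) topology" where "PT \<equiv> product_topology (\<lambda>_. euclidean) UNIV"

lemma Kset_compact: "compactin PT Kset"
proof (rule closed_compactin)
  show "compactin PT (PiE UNIV (\<lambda>y. cball 0 (L.nrm y)))"
    by (simp add: compactin_PiE)
  show "Kset \<subseteq> PiE UNIV (\<lambda>y. cball 0 (L.nrm y))"
    unfolding Kset_def by (auto simp: PiE_def extensional_def)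
  define C1 where "C1 = (\<lambda>(y, z). {g \<in> topspace PT. g (y + z) - g y - g z \<in> {0}})"
  define C2 where "C2 = (\<lambda>(c, y). {g \<in> topspace PT. g (sL c y) - c * g y \<in> {0}})"
  define C3 where "C3 = (\<lambda>y. {g \<in> topspace PT. g y \<in> cball 0 (L.nrm y)})"
  have "Kset = \<Inter> (range C1 \<union> range C2 \<union> range C3)"
  proof (rule set_eqI, rule iffI)
    fix g assume "g \<in> Kset"
    then show "g \<in> \<Inter> (range C1 \<union> range C2 \<union> range C3)"
      unfolding Kset_def C1_def C2_def C3_def by (auto simp: PiE_def extensional_def)
  next
    fix g assume h: "g \<in> \<Inter> (range C1 \<union> range C2 \<union> range C3)"
    have 1: "g \<in> C1 (y, z)" for y z using h by blast
    have 2: "g \<in> C2 (c, y)" for c y using h by blast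
    have 3: "g \<in> C3 y" for y using h by blast
    show "g \<in> Kset" unfolding Kset_def
    proof (intro CollectI conjI allI)
      fix y z show "g (y + z) = g y + g z" using 1[of y z] by (simp add: C1_def algebra_simps)
    next
      fix c y show "g (sL c y) = c * g y" using 2[of c y] by (simp add: C2_def)
    next
      fix y show "cmod (g y) \<le> L.nrm y" using 3[of y] by (simp add: C3_def)
    qed
  qed
  moreover have "closedin PT (\<Inter> (range C1 \<union> range C2 \<union> range C3))"
  proof (rule closedin_Inter)
    show "range C1 \<union> range C2 \<union> range C3 \<noteq> {}" by blast
    fix S assume "S \<in> range C1 \<union> range C2 \<union> range C3"
    then consider (a) y z where "S = C1 (y, z)" | (b) c y where "S = C2 (c, y)" | (c) y where "S = C3 y"
      by auto
    then show "closedin PT S"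
    proof cases
      case a
      show ?thesis unfolding a C1_def case_prod_conv
        by (rule closedin_continuous_map_preimage[where Y=euclidean]) (auto intro!: continuous_intros)
    next
      case b
      have cm: "continuous_map PT euclidean (\<lambda>g. c * g y)"
      proof -
        have "continuous_map PT euclidean ((\<lambda>z. c * z) \<circ> (\<lambda>g. g y))"
          by (rule continuous_map_compose[OF continuous_map_product_projection]) (auto intro!: continuous_intros)
        then show ?thesis by (simp add: comp_def)
      qed
      show ?thesis unfolding b C2_def case_prod_conv
        by (rule closedin_continuous_map_preimage[where Y=euclidean]) (auto intro!: continuous_intros cm)
    next
      case c
      show ?thesis unfolding c C3_def
        by (rule closedin_continuous_map_preimage[where Y=euclidean]) (auto intro!: continuous_intros)
    qed
  qed
  ultimately show "closedin PT Kset" by simp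
qed

lemma Phi_in_Kset: "L.nrm x \<le> 1 \<Longrightarrow> Phi x \<in> Kset"
  unfolding Kset_def Phi_def
proof (intro CollectI conjI allI)
  fix y z show "sp ip (br x (y + z)) = sp ip (br x y) + sp ip (br x z)" by (rule L.ip_add_right)
next
  fix c y show "sp ip (br x (sL c y)) = c * sp ip (br x y)" by (rule L.ip_sc_right)
next
  fix y assume "L.nrm x \<le> 1"
  then have "L.nrm x * L.nrm y \<le> L.nrm y" by (intro mult_left_le_one_le) auto
  then show "cmod (sp ip (br x y)) \<le> L.nrm y"
    using L.cs[of x y] by linarith
qed

lemma Kset_rep: "g \<in> Kset \<Longrightarrow> \<exists>x. L.nrm x \<le> 1 \<and> Phi x = g"
proof -
  assume g: "g \<in> Kset"
  have ga: "\<And>a b. g (a + b) = g a + g b" "\<And>c a. g (sL c a) = c * g a" "\<And>a. cmod (g a) \<le> 1 * L.nrm a"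
    using g unfolding Kset_def by simp_all
  have "\<exists>x. \<forall>z. g z = sp ip (br x z)"
    by (rule L.riesz[OF L_complete ga])
  then obtain x where x: "\<And>z. g z = sp ip (br x z)" by blast
  have sq: "(L.nrm x)^2 \<le> L.nrm x"
  proof -
    have "(L.nrm x)^2 = Re (g x)" using x L.nrm_sq by simp
    also have "\<dots> \<le> cmod (g x)" by (rule complex_Re_le_cmod)
    also have "\<dots> \<le> L.nrm x" using ga(3)[of x] by simp
    finally show ?thesis .
  qed
  have "L.nrm x \<le> 1"
  proof (rule ccontr)
    assume "\<not> L.nrm x \<le> 1"
    then have "L.nrm x > 1" by simp
    then have "L.nrm x * 1 < L.nrm x * L.nrm x" by (intro mult_strict_left_mono) auto
    then show False using sq by (simp add: power2_eq_square)
  qed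
  moreover have "Phi x = g" using x unfolding Phi_def by auto
  ultimately show ?thesis by blast
qed

lemma Phi_inj: "Phi x = Phi x' \<Longrightarrow> x = x'"
proof -
  assume h: "Phi x = Phi x'"
  have "sp ip (br x y) = sp ip (br x' y)" for y using fun_cong[OF h, of y] unfolding Phi_def by simp
  then have "sp ip (br (x - x') (x - x')) = 0" by (simp add: L.ip_diff_left)
  then have "x - x' = 0" by (rule L.ip_def0)
  then show "x = x'" by simp
qed

definition Psi :: "('b \<Rightarrow> complex) \<Rightarrow> 'b" where "Psi g = (SOME x. L.nrm x \<le> 1 \<and> Phi x = g)"

lemma Psi: "g \<in> Kset \<Longrightarrow> L.nrm (Psi g) \<le> 1 \<and> Phi (Psi g) = g"
  unfolding Psi_def by (rule someI_ex) (rule Kset_rep)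

lemma Psi_image: "Psi ` Kset = {x. L.nrm x \<le> 1}"
proof
  show "Psi ` Kset \<subseteq> {x. L.nrm x \<le> 1}" using Psi by auto
  show "{x. L.nrm x \<le> 1} \<subseteq> Psi ` Kset"
  proof
    fix x assume x: "x \<in> {x. L.nrm x \<le> 1}"
    then have k: "Phi x \<in> Kset" using Phi_in_Kset by simp
    then have "Psi (Phi x) = x" using Psi Phi_inj by blast
    then show "x \<in> Psi ` Kset" using k by (metis image_eqI)
  qed
qed

lemma open_finite_preimage:
  "openin PT {g. \<forall>j<(n::nat). cmod (g (w j) - c j) < d}"
proof (induction n)
  case 0 then show ?case using openin_topspace[of PT] by simp
next
  case (Suc n)
  have "{g. \<forall>j<Suc n. cmod (g (w j) - c j) < d} =
        {g. \<forall>j<n. cmod (g (w j) - c j) < d} \<inter> {g \<in> topspace PT. g (w n) \<in> ball (c n) d}"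
    by (auto simp: less_Suc_eq dist_norm norm_minus_commute)
  moreover have "openin PT {g \<in> topspace PT. g (w n) \<in> ball (c n) d}"
    by (rule openin_continuous_map_preimage[OF continuous_map_product_projection]) auto
  ultimately show ?case using Suc by auto
qed

lemma main_compact: "compactin (weak_star_topology sA ip br) {x. L.nrm x \<le> 1}"
proof -
  have "continuous_map (subtopology PT Kset) (weak_star_topology sA ip br) Psi"
    unfolding weak_star_topology_def continuous_on_generated_topo_iff
  proof (intro conjI allI impI)
    show "Psi ` topspace (subtopology PT Kset) \<subseteq> \<Union> (weak_star_base sA ip br)"
    proof -
      have "UNIV \<in> weak_star_base sA ip br"
        unfolding weak_star_base_def
        by (rule CollectI, rule exI[where x=0], rule exI[where x=0], rule exI[where x="\<lambda>_. 0"],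
            rule exI[where x="\<lambda>_. id"], rule exI[where x=1]) simp
      then show ?thesis by blast
    qed
  next
    fix U assume U0: "U \<in> weak_star_base sA ip br"
    have "\<exists>(n::nat) x0 y S d. U = {x. \<forall>j<n. cmod (sp ip (S j (br x (y j) - br x0 (y j)))) < d}
      \<and> (\<forall>j<n. S j \<in> C_alg sA ip) \<and> 0 < d"
      using U0 unfolding weak_star_base_def by (simp only: mem_Collect_eq)
    then obtain n :: nat and x0 y S d where U: "U = {x. \<forall>j<n. cmod (sp ip (S j (br x (y j) - br x0 (y j)))) < d}"
      and SC: "\<forall>j<n. S j \<in> C_alg sA ip"
      by (elim exE conjE)
    have "\<forall>j. \<exists>w. j < n \<longrightarrow> (\<forall>z. sp ip (S j (br z (y j))) = sp ip (br z w))"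
    proof
      fix j
      show "\<exists>w. j < n \<longrightarrow> (\<forall>z. sp ip (S j (br z (y j))) = sp ip (br z w))"
      proof (cases "j < n")
        case True
        then have "S j \<in> C_alg sA ip" using SC by simp
        from sp_S_rep[OF this, of "y j"] show ?thesis by simp
      next
        case False then show ?thesis by simp
      qed
    qed
    from choice[OF this] obtain w where w0: "\<forall>j. j < n \<longrightarrow> (\<forall>z. sp ip (S j (br z (y j))) = sp ip (br z (w j)))"
      by (elim exE)
    then have w: "\<And>j z. j < n \<Longrightarrow> sp ip (S j (br z (y j))) = sp ip (br z (w j))" by simp
    have Ueq: "U = {x. \<forall>j<n. cmod (Phi x (w j) - Phi x0 (w j)) < d}"
      unfolding U Phi_def
      using w by (simp flip: br_diff_left add: L.ip_diff_left)
    have "Psi -` U \<inter> topspace (subtopology PT Kset) = {g. \<forall>j<n. cmod (g (w j) - Phi x0 (w j)) < d} \<inter> Kset"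
    proof (rule set_eqI)
      fix g
      have tsp: "topspace (subtopology PT Kset) = Kset" by (simp add: topspace_subtopology)
      show "g \<in> Psi -` U \<inter> topspace (subtopology PT Kset) \<longleftrightarrow>
            g \<in> {g. \<forall>j<n. cmod (g (w j) - Phi x0 (w j)) < d} \<inter> Kset"
      proof (cases "g \<in> Kset")
        case True
        then have "Phi (Psi g) = g" using Psi by blast
        then show ?thesis using True unfolding tsp Ueq by simp
      next
        case False then show ?thesis unfolding tsp by simp
      qed
    qed
    then show "openin (subtopology PT Kset) (Psi -` U \<inter> topspace (subtopology PT Kset))"
      unfolding openin_subtopology
      by (intro exI[where x="{g. \<forall>j<n. cmod (g (w j) - Phi x0 (w j)) < d}"] conjI open_finite_preimage)
  qed
  from image_compactin[OF _ this] have "compactin (weak_star_topology sA ip br) (Psi ` Kset)"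
    using Kset_compact by (simp add: compactin_subtopology)
  then show ?thesis using Psi_image by simp
qed

end

theorem mainTheorem3:
  fixes sA :: "complex \<Rightarrow> 'a::ring \<Rightarrow> 'a" and ip :: "'a \<Rightarrow> 'a \<Rightarrow> complex"
    and sL :: "complex \<Rightarrow> 'b::ab_group_add \<Rightarrow> 'b" and act :: "'b \<Rightarrow> 'a \<Rightarrow> 'b"
    and br :: "'b \<Rightarrow> 'b \<Rightarrow> 'a"
  assumes "proper_H_star_algebra sA ip"
    and "Hilbert_module sA ip sL act br"
  shows "compactin (weak_star_topology sA ip br) {x. Lnorm ip br x \<le> 1}"
proof -
  interpret hmod sA ip sL act br
    using assms by (simp add: hmod_def hstar_def hmod_axioms_def)
  show ?thesis using main_compact Lnorm_eq by simp
qed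


end
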